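(* Let $\Pi$ be a $2$-dimensional toral sub-manifold confined to a rational plane, parametrised as $\Pi=\{u\xi+v\eta:(u,v)\in[0,A]\times[0,B]\}$ with $\xi,\eta$ as specified in the context. Then $$\mathcal{G}=\sum_{\substack{\lambda,\lambda'\in\Lambda_m\\ \lambda\neq\lambda'}}\left|\int_0^A\int_0^B e^{2\pi i\langle\lambda-\lambda',u\xi+v\eta\rangle}du\,dv\right|^2\ll_\Pi N\cdot\kappa(\sqrt m).$$
   Context: For a positive integer $m$ let $\Lambda_m=\{\lambda\in\mathbb{Z}^3:\|\lambda\|^2=m\}$ and $N=|\Lambda_m|$; $m$ ranges over integers with $m\not\equiv 0,4,7\pmod 8$ and bounds refer to $m\to\infty$. Let $\vec n=(n_1,n_2,n_3)$ be the unit normal to the plane containing $\Pi\subset\mathbb{R}^3/\mathbb{Z}^3$, with coordinates labelled so that $n_1\ne0$; the plane is rational if $n_2/n_1,n_3/n_1\in\mathbb{Q}$. Here $\xi=\frac{(n_2,-n_1,0)}{\sqrt{n_1^2+n_2^2}}$, $\eta=\frac{(n_1n_3,n_2n_3,-n_1^2-n_2^2)}{\sqrt{n_1^2+n_2^2}}$, and $A=\max\{u:u\xi+v\eta\in\Pi\}$, $B=\max\{v:u\xi+v\eta\in\Pi\}$. For $R>0$, $\kappa(R)$ is the maximal number of points of $\mathbb{Z}^3$ in the intersection of the sphere of radius $R$ centred at the origin with any plane. *)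

theory Defs
  imports "HOL-Analysis.Analysis"
begin

type_synonym ipt = "int \<times> int \<times> int"
type_synonym rpt = "real \<times> real \<times> real"

definition rdot :: "rpt \<Rightarrow> rpt \<Rightarrow> real" where
  "rdot x y = fst x * fst y + fst (snd x) * fst (snd y) + snd (snd x) * snd (snd y)"

definition ivec :: "ipt \<Rightarrow> rpt" where
  "ivec l = (real_of_int (fst l), real_of_int (fst (snd l)), real_of_int (snd (snd l)))"

definition Lambda :: "nat \<Rightarrow> ipt set" where
  "Lambda m = {(x, y, z). x^2 + y^2 + z^2 = int m}"

definition NN :: "nat \<Rightarrow> nat" where
  "NN m = card (Lambda m)"

definition kappa :: "real \<Rightarrow> nat" where
  "kappa R = Sup {card {l :: ipt. rdot (ivec l) (ivec l) = R^2 \<and> rdot a (ivec l) = c}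
                  | a c. a \<noteq> (0, 0, 0)}"

definition xi :: "real \<Rightarrow> real \<Rightarrow> real \<Rightarrow> rpt" where
  "xi n1 n2 n3 = (n2 / sqrt (n1^2 + n2^2), - n1 / sqrt (n1^2 + n2^2), 0)"

definition eta :: "real \<Rightarrow> real \<Rightarrow> real \<Rightarrow> rpt" where
  "eta n1 n2 n3 = (n1 * n3 / sqrt (n1^2 + n2^2), n2 * n3 / sqrt (n1^2 + n2^2),
                   - (n1^2 + n2^2) / sqrt (n1^2 + n2^2))"

definition piPt :: "real \<Rightarrow> real \<Rightarrow> real \<Rightarrow> real \<Rightarrow> real \<Rightarrow> rpt" where
  "piPt n1 n2 n3 u v =
     (let a = xi n1 n2 n3; b = eta n1 n2 n3 in
      (u * fst a + v * fst b, u * fst (snd a) + v * fst (snd b), u * snd (snd a) + v * snd (snd b)))"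

definition Iint :: "real \<Rightarrow> real \<Rightarrow> real \<Rightarrow> real \<Rightarrow> real \<Rightarrow> ipt \<Rightarrow> complex" where
  "Iint n1 n2 n3 A B d =
     integral {0..A} (\<lambda>u. integral {0..B}
        (\<lambda>v. cis (2 * pi * rdot (ivec d) (piPt n1 n2 n3 u v))))"

definition GG :: "real \<Rightarrow> real \<Rightarrow> real \<Rightarrow> real \<Rightarrow> real \<Rightarrow> nat \<Rightarrow> real" where
  "GG n1 n2 n3 A B m =
     (\<Sum>p \<in> {(l, l'). l \<in> Lambda m \<and> l' \<in> Lambda m \<and> l \<noteq> l'}.
        (cmod (Iint n1 n2 n3 A B (fst p - snd p)))^2)"

end

theory Submission
  imports Defs
begin

lemma deriv_cis:
  fixes a :: real assumes "a \<noteq> 0"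
  shows "((\<lambda>u. cis (2*pi*u*a) / (2*pi*\<i>*a)) has_vector_derivative cis (2*pi*x*a)) (at x within S)"
  unfolding has_vector_derivative_def
  apply (rule has_derivative_eq_rhs)
   apply (rule derivative_intros)+
  using assms apply (auto simp: fun_eq_iff field_simps scaleR_conv_of_real)
  done

lemma E_has_int:
  fixes a A :: real assumes "a \<noteq> 0" "A \<ge> 0"
  shows "((\<lambda>u. cis (2*pi*u*a)) has_integral ((cis (2*pi*A*a) - 1) / (2*pi*\<i>*a))) {0..A}"
proof -
  have "((\<lambda>u. cis (2*pi*u*a)) has_integral
     (cis (2*pi*A*a) / (2*pi*\<i>*a) - cis (2*pi*0*a) / (2*pi*\<i>*a))) {0..A}"
    by (rule fundamental_theorem_of_calculus[OF assms(2)]) (intro ballI deriv_cis assms(1))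
  then show ?thesis by (simp add: diff_divide_distrib)
qed

definition EE :: "real \<Rightarrow> real \<Rightarrow> complex" where
  "EE a A = integral {0..A} (\<lambda>u. cis (2*pi*u*a))"

lemma EE_le1:
  assumes "A \<ge> 0" shows "norm (EE a A) \<le> A"
proof -
  have c: "continuous_on {0..A} (\<lambda>u. cis (2*pi*u*a))"
    by (intro continuous_intros)
  have "norm (EE a A) \<le> integral {0..A} (\<lambda>u. 1::real)"
    unfolding EE_def
    by (rule integral_norm_bound_integral) (use c integrable_continuous_interval in auto)
  then show ?thesis using assms by simp
qed

lemma EE_le2:
  assumes "A \<ge> 0" "a \<noteq> 0" shows "norm (EE a A) \<le> 1 / (pi * \<bar>a\<bar>)"
proof -
  have e: "EE a A = (cis (2*pi*A*a) - 1) / (2*pi*\<i>*a)"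
    unfolding EE_def using E_has_int[OF assms(2,1)] by (rule integral_unique)
  have n1: "norm (cis (2*pi*A*a) - 1) \<le> 2"
    using norm_triangle_ineq4[of "cis (2*pi*A*a)" 1] by simp
  have n2: "norm (2*pi*\<i>*complex_of_real a) = 2*pi*\<bar>a\<bar>"
    by (simp add: norm_mult)
  have "norm (EE a A) = norm (cis (2*pi*A*a) - 1) / (2*pi*\<bar>a\<bar>)"
    unfolding e norm_divide n2 by simp
  also have "\<dots> \<le> 2 / (2*pi*\<bar>a\<bar>)"
    using n1 assms by (intro divide_right_mono) auto
  finally show ?thesis by simp
qed

lemma rdot_piPt:
  "rdot x (piPt n1 n2 n3 u v) = u * rdot x (xi n1 n2 n3) + v * rdot x (eta n1 n2 n3)"
  unfolding piPt_def Let_def rdot_def by (simp add: algebra_simps)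

lemma Iint_eq:
  "Iint n1 n2 n3 A B d = EE (rdot (ivec d) (xi n1 n2 n3)) A * EE (rdot (ivec d) (eta n1 n2 n3)) B"
proof -
  define a where "a = rdot (ivec d) (xi n1 n2 n3)"
  define c where "c = rdot (ivec d) (eta n1 n2 n3)"
  have "\<And>u w. cis (2 * pi * rdot (ivec d) (piPt n1 n2 n3 u w)) = cis (2*pi*u*a) * cis (2*pi*w*c)"
    unfolding rdot_piPt cis_mult a_def c_def by (simp add: algebra_simps)
  then have "Iint n1 n2 n3 A B d = integral {0..A} (\<lambda>u. cis (2*pi*u*a) * EE c B)"
    unfolding Iint_def EE_def by simp
  also have "\<dots> = EE a A * EE c B" unfolding EE_def by simp
  finally show ?thesis unfolding a_def c_def .
qed

lemma S_bound:
  "(\<Sum>j\<in>{-int M..int M}-{0}. 1 / (real_of_int j)^2) \<le> 4 - 4 / (real M + 1)"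
proof (induction M)
  case 0
  then show ?case by simp
next
  case (Suc M)
  have set: "{-int (Suc M)..int (Suc M)}-{0} = insert (int M + 1) (insert (-(int M + 1)) ({-int M..int M}-{0}))"
    by auto
  have "(\<Sum>j\<in>{-int (Suc M)..int (Suc M)}-{0}. 1 / (real_of_int j)^2)
     = 2 / (real M + 1)^2 + (\<Sum>j\<in>{-int M..int M}-{0}. 1 / (real_of_int j)^2)"
    unfolding set by (simp add: power2_eq_square algebra_simps)
  also have "\<dots> \<le> 2 / (real M + 1)^2 + 4 - 4 / (real M + 1)" using Suc by simp
  also have "\<dots> \<le> 4 - 4 / (real (Suc M) + 1)"
  proof -
    define x where "x = real M + 1"
    have x: "x \<ge> 1" unfolding x_def by simp
    have "2 / x^2 + 4 - 4 / x \<le> 4 - 4 / (x + 1)"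
    proof -
      have "2 / x^2 - 4 / x + 4 / (x + 1) = (2 - 2*x) / (x^2 * (x+1))"
        using x by (simp add: field_simps power2_eq_square)
      also have "\<dots> \<le> 0" using x by (intro divide_nonpos_pos) auto
      finally show ?thesis by simp
    qed
    then show ?thesis unfolding x_def by simp
  qed
  finally show ?case .
qed


lemma abs_le_sq_int: "\<bar>x::int\<bar> \<le> x^2"
  by (cases "x = 0") (auto simp: power2_eq_square abs_mult[symmetric] intro: self_le_power[of "\<bar>x\<bar>" 2, simplified])

lemma finite_Lambda: "finite (Lambda m)"
proof -
  have "Lambda m \<subseteq> {-int m..int m} \<times> {-int m..int m} \<times> {-int m..int m}"
  proof
    fix l assume "l \<in> Lambda m"
    then obtain x y z where l: "l = (x,y,z)" and e: "x^2+y^2+z^2 = int m"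
      unfolding Lambda_def by auto
    have "\<bar>x\<bar> \<le> int m" "\<bar>y\<bar> \<le> int m" "\<bar>z\<bar> \<le> int m"
      using e abs_le_sq_int[of x] abs_le_sq_int[of y] abs_le_sq_int[of z]
        zero_le_power2[of x] zero_le_power2[of y] zero_le_power2[of z] by linarith+
    then show "l \<in> {-int m..int m} \<times> {-int m..int m} \<times> {-int m..int m}"
      unfolding l by auto
  qed
  then show ?thesis by (rule finite_subset) auto
qed

lemma rdot_Lambda: "rdot (ivec l) (ivec l) = real m \<longleftrightarrow> l \<in> Lambda m"
proof -
  obtain x y z where l: "l = (x,y,z)" by (cases l) auto
  have "rdot (ivec l) (ivec l) = of_int (x^2+y^2+z^2)"
    unfolding l by (simp add: rdot_def ivec_def power2_eq_square)
  moreover have "real m = of_int (int m)" by simp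
  ultimately have "rdot (ivec l) (ivec l) = real m \<longleftrightarrow> x^2+y^2+z^2 = int m"
    by (metis of_int_eq_iff)
  then show ?thesis unfolding l Lambda_def by simp
qed

lemma kappa_bound:
  assumes "a \<noteq> (0,0,0)"
  shows "card {l :: ipt. rdot (ivec l) (ivec l) = (sqrt (real m))^2 \<and> rdot a (ivec l) = c}
         \<le> kappa (sqrt (real m))"
  unfolding kappa_def
proof (rule cSup_upper)
  show "card {l :: ipt. rdot (ivec l) (ivec l) = (sqrt (real m))^2 \<and> rdot a (ivec l) = c}
    \<in> {card {l :: ipt. rdot (ivec l) (ivec l) = (sqrt (real m))^2 \<and> rdot a (ivec l) = c}
                  | a c. a \<noteq> (0, 0, 0)}" using assms by blast
  show "bdd_above {card {l :: ipt. rdot (ivec l) (ivec l) = (sqrt (real m))^2 \<and> rdot a (ivec l) = c}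
                  | a c. a \<noteq> (0, 0, 0)}"
  proof (rule bdd_aboveI[of _ "card (Lambda m)"])
    fix x assume "x \<in> {card {l :: ipt. rdot (ivec l) (ivec l) = (sqrt (real m))^2 \<and> rdot a (ivec l) = c}
                  | a c. a \<noteq> (0, 0, 0)}"
    then obtain a c where x: "x = card {l :: ipt. rdot (ivec l) (ivec l) = (sqrt (real m))^2 \<and> rdot a (ivec l) = c}"
      by blast
    have "{l :: ipt. rdot (ivec l) (ivec l) = (sqrt (real m))^2 \<and> rdot a (ivec l) = c} \<subseteq> Lambda m"
      using rdot_Lambda by auto
    then show "x \<le> card (Lambda m)" unfolding x by (intro card_mono finite_Lambda)
  qed
qed

lemma kappa_bound':
  assumes "a \<noteq> (0,0,0)"
  shows "card {l \<in> Lambda m. rdot a (ivec l) = c} \<le> kappa (sqrt (real m))"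
proof -
  have "{l \<in> Lambda m. rdot a (ivec l) = c} = {l :: ipt. rdot (ivec l) (ivec l) = (sqrt (real m))^2 \<and> rdot a (ivec l) = c}"
    using rdot_Lambda by auto
  then show ?thesis using kappa_bound[OF assms] by simp
qed

lemma J_bound:
  fixes J :: "int set" and AA c0 :: real
  assumes "finite J" "c0 \<ge> 0" "AA \<ge> 0"
  shows "(\<Sum>j\<in>J. if j = 0 then AA else c0 / (real_of_int j)^2) \<le> AA + 4 * c0"
proof -
  define h where "h = (\<lambda>j::int. if j = 0 then AA else c0 / (real_of_int j)^2)"
  obtain M :: nat where M: "\<forall>j\<in>J. \<bar>j\<bar> \<le> int M"
  proof -
    have "\<forall>j\<in>J. \<bar>j\<bar> \<le> int (nat (Max (insert 0 (abs ` J))))"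
      using assms(1) by (auto intro: Max_ge order.trans[OF _ le_nat_iff[THEN iffD2]])
    then show ?thesis using that by blast
  qed
  have hn: "\<And>j. h j \<ge> 0" unfolding h_def using assms by auto
  have "(\<Sum>j\<in>J. h j) \<le> (\<Sum>j\<in>{-int M..int M}. h j)"
    using M hn by (intro sum_mono2) (auto simp: abs_le_iff)
  also have "\<dots> = h 0 + (\<Sum>j\<in>{-int M..int M}-{0}. h j)"
    by (subst sum.remove[of _ 0]) auto
  also have "(\<Sum>j\<in>{-int M..int M}-{0}. h j) = c0 * (\<Sum>j\<in>{-int M..int M}-{0}. 1 / (real_of_int j)^2)"
    unfolding h_def sum_distrib_left by (intro sum.cong) auto
  also have "\<dots> \<le> c0 * 4"
    using S_bound[of M] assms(2) by (intro mult_left_mono) (auto, smt (verit) divide_nonneg_nonneg of_nat_0_le_iff)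
  finally show ?thesis unfolding h_def by simp
qed


lemma count_bound:
  fixes h :: "int \<Rightarrow> real" and kk :: "ipt \<Rightarrow> int" and p q :: int
  assumes kk: "\<And>x. kk x = p * fst x - q * fst (snd x)" and q: "q \<noteq> 0"
    and hn: "\<And>j. h j \<ge> 0" and H: "\<And>J. finite J \<Longrightarrow> sum h J \<le> H"
  shows "(\<Sum>l'\<in>Lambda m. h (kk l0 - kk l')) \<le> real (kappa (sqrt (real m))) * H"
proof -
  define F where "F = (\<lambda>l'. kk l0 - kk l')"
  have "(\<Sum>l'\<in>Lambda m. h (kk l0 - kk l')) = (\<Sum>j\<in>F ` Lambda m. \<Sum>l'\<in>{x. x \<in> Lambda m \<and> F x = j}. h (F l'))"
    unfolding F_def by (rule sum.image_gen[OF finite_Lambda])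
  also have "\<dots> = (\<Sum>j\<in>F ` Lambda m. real (card {x. x \<in> Lambda m \<and> F x = j}) * h j)"
    by (intro sum.cong refl) simp
  also have "\<dots> \<le> (\<Sum>j\<in>F ` Lambda m. real (kappa (sqrt (real m))) * h j)"
  proof (intro sum_mono mult_right_mono hn)
    fix j
    have "{x. x \<in> Lambda m \<and> F x = j} = {x \<in> Lambda m. rdot (of_int p, - of_int q, 0) (ivec x) = of_int (kk l0 - j)}"
    proof -
      have r: "\<And>x. rdot (of_int p, - of_int q, 0) (ivec x) = (of_int (kk x) :: real)"
        by (simp add: kk rdot_def ivec_def)
      show ?thesis unfolding F_def r of_int_eq_iff by auto
    qed
    moreover have "(of_int p, - of_int q, 0) \<noteq> ((0,0,0) :: rpt)" using q by simp
    ultimately show "real (card {x. x \<in> Lambda m \<and> F x = j}) \<le> real (kappa (sqrt (real m)))"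
      using kappa_bound' by simp
  qed
  also have "\<dots> = real (kappa (sqrt (real m))) * sum h (F ` Lambda m)"
    by (simp add: sum_distrib_left)
  also have "\<dots> \<le> real (kappa (sqrt (real m))) * H"
    by (intro mult_left_mono H finite_imageI finite_Lambda) auto
  finally show ?thesis .
qed

theorem lemma4p3:
  fixes n1 n2 n3 A B :: real
  assumes "n1^2 + n2^2 + n3^2 = 1"
    and "n1 \<noteq> 0"
    and "n2 / n1 \<in> \<rat>" and "n3 / n1 \<in> \<rat>"
    and "A > 0" and "B > 0"
  shows "\<exists>C. \<forall>\<^sub>F m in at_top. m mod 8 \<notin> {0, 4, 7} \<longrightarrow>
           GG n1 n2 n3 A B m \<le> C * real (NN m) * real (kappa (sqrt (real m)))"
proof -
  obtain p q :: int where q: "q > 0" and pq: "n2 / n1 = of_int p / of_int q"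
    using Rats_cases'[OF assms(3)] by metis
  have n2: "n2 = n1 * of_int p / of_int q" using pq assms(2) q by (simp add: field_simps)
  define s where "s = sqrt (n1^2 + n2^2)"
  have s: "s > 0" unfolding s_def using assms(2) by (simp add: add_pos_nonneg)
  define \<delta> where "\<delta> = n1 / (of_int q * s)"
  have \<delta>: "\<delta> \<noteq> 0" unfolding \<delta>_def using assms(2) q s by simp
  define kk where "kk = (\<lambda>x::ipt. p * fst x - q * fst (snd x))"
  have xi_eq: "rdot (ivec d) (xi n1 n2 n3) = \<delta> * real_of_int (kk d)" for d
    unfolding rdot_def ivec_def xi_def kk_def \<delta>_def s_def[symmetric] using q s
    by (simp add: n2 field_simps)
  define c0 where "c0 = 1 / (pi * \<delta>)^2"
  have c0: "c0 \<ge> 0" unfolding c0_def by simp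
  define h where "h = (\<lambda>j::int. if j = 0 then A^2 else c0 / (real_of_int j)^2)"
  define H where "H = A^2 + 4 * c0"
  have hn: "h j \<ge> 0" for j unfolding h_def using c0 by auto
  have hH: "finite J \<Longrightarrow> sum h J \<le> H" for J
    unfolding h_def H_def using J_bound c0 by simp
  have gb: "(cmod (Iint n1 n2 n3 A B d))^2 \<le> B^2 * h (kk d)" for d
  proof -
    define a where "a = rdot (ivec d) (xi n1 n2 n3)"
    define b where "b = rdot (ivec d) (eta n1 n2 n3)"
    have eq: "(cmod (Iint n1 n2 n3 A B d))^2 = (norm (EE b B))^2 * (norm (EE a A))^2"
      unfolding Iint_eq a_def b_def by (simp add: norm_mult power_mult_distrib)
    have 1: "(norm (EE b B))^2 \<le> B^2"
      using EE_le1[of B b] assms(6) by (intro power_mono) auto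
    have 2: "(norm (EE a A))^2 \<le> h (kk d)"
    proof (cases "kk d = 0")
      case True
      then show ?thesis unfolding h_def using EE_le1[of A a] assms(5) by (auto intro: power_mono)
    next
      case False
      have a: "a = \<delta> * real_of_int (kk d)" unfolding a_def xi_eq ..
      have an: "a \<noteq> 0" using False \<delta> a by simp
      have "(norm (EE a A))^2 \<le> (1 / (pi * \<bar>a\<bar>))^2"
        using EE_le2[of A a] assms(5) an by (intro power_mono) auto
      also have "\<dots> = c0 / (real_of_int (kk d))^2"
        unfolding c0_def a by (simp add: power_mult_distrib abs_mult field_simps)
      finally show ?thesis unfolding h_def using False by simp
    qed
    show ?thesis unfolding eq
      by (rule order.trans[OF mult_mono[OF 1 2]]) (auto simp: hn)
  qed
  have main: "GG n1 n2 n3 A B m \<le> (B^2 * H) * real (NN m) * real (kappa (sqrt (real m)))" for m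
  proof -
    let ?g = "\<lambda>d. (cmod (Iint n1 n2 n3 A B d))^2"
    have "GG n1 n2 n3 A B m \<le> (\<Sum>pp\<in>Lambda m \<times> Lambda m. ?g (fst pp - snd pp))"
      unfolding GG_def
      by (intro sum_mono2 finite_cartesian_product finite_Lambda) auto
    also have "\<dots> = (\<Sum>l\<in>Lambda m. \<Sum>l'\<in>Lambda m. ?g (l - l'))"
      by (simp add: sum.cartesian_product case_prod_unfold)
    also have "\<dots> \<le> (\<Sum>l\<in>Lambda m. B^2 * (real (kappa (sqrt (real m))) * H))"
    proof (intro sum_mono)
      fix l assume "l \<in> Lambda m"
      have "(\<Sum>l'\<in>Lambda m. ?g (l - l')) \<le> (\<Sum>l'\<in>Lambda m. B^2 * h (kk l - kk l'))"
      proof (intro sum_mono)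
        fix l' show "?g (l - l') \<le> B^2 * h (kk l - kk l')"
          using gb[of "l - l'"] by (simp add: kk_def algebra_simps)
      qed
      also have "\<dots> = B^2 * (\<Sum>l'\<in>Lambda m. h (kk l - kk l'))" by (simp add: sum_distrib_left)
      also have "\<dots> \<le> B^2 * (real (kappa (sqrt (real m))) * H)"
        by (intro mult_left_mono count_bound[of kk p q h H]) (use q hn hH kk_def in auto)
      finally show "(\<Sum>l'\<in>Lambda m. ?g (l - l')) \<le> B^2 * (real (kappa (sqrt (real m))) * H)" .
    qed
    also have "\<dots> = (B^2 * H) * real (NN m) * real (kappa (sqrt (real m)))"
      by (simp add: NN_def)
    finally show ?thesis .
  qed
  show ?thesis
    by (rule exI[of _ "B^2 * H"]) (intro always_eventually allI impI main)
qed

end
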